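(* Consider the two-layer multi-item order fulfillment problem described in the context with a single FDC ($K=1$), fixed costs $f_0,f_1>0$, and time-invariant variable costs $c_{k,t}^i\equiv c_k^i$. Let $w=f_0/f_1$. Let \textsc{Randomized-Cost-Comparison V-Priority} be the following randomized policy. In each period $t$, for each item $i$, set $\hat m_{1,t}^i=\min\{S_t^i,I_{1,t-1}^i\}$ if $c_1^i<c_0^i$ and $\hat m_{1,t}^i=0$ otherwise, and $\hat m_{0,t}^i=S_t^i-\hat m_{1,t}^i$. Let $x_t=\sum_{i=1}^n(c_0^i-c_1^i)\hat m_{1,t}^i$ and draw, independently of everything else, $\theta_t\sim\mathrm{Bernoulli}(p(x_t))$, where \[p(x)=\begin{cases}1,& x\le f_1,\\ \dfrac{f_1^2-(f_0+x)f_0}{f_1^2+(f_0+x)(x-f_1)},& f_1<x\le\max\{f_1,\ f_1^2/f_0-f_0\},\\ 0,& x>\max\{f_1,\ f_1^2/f_0-f_0\}.\end{cases}\] If $\theta_t=1$, fulfill the whole order from the RDC ($m_{0,t}^i=S_t^i$, $m_{1,t}^i=0$); otherwise set $m_{k,t}^i=\hat m_{k,t}^i$. Then \[\mathfrak R_{\mathrm{inv}}(\textsc{Randomized-Cost-Comparison V-Priority})\le\begin{cases}1+\dfrac{1}{1-w+2\sqrt{1-w}},& w<\frac{\sqrt5-1}{2},\\ 1+w,& w\ge\frac{\sqrt5-1}{2}.\end{cases}\]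
   Context: Problem with one FDC (index $1$) and one RDC (index $0$, unlimited inventory). The FDC initially holds $I_{1,0}^i\ge0$ units of item $i\in[n]$, never replenished. In periods $t=1,\dots,T$ an order $\boldsymbol S_t=(S_t^i)_i$ of nonnegative integers arrives; the policy must immediately and irrevocably choose $m_{0,t}^i,m_{1,t}^i\ge0$ with $m_{0,t}^i+m_{1,t}^i=S_t^i$ and $m_{1,t}^i\le I_{1,t-1}^i$, where $I_{1,t}^i=I_{1,0}^i-\sum_{\tau\le t}m_{1,\tau}^i$. Period cost $\sum_{k=0,1}[f_k\mathbb{I}(\sum_im_{k,t}^i>0)+\sum_ic_k^im_{k,t}^i]$; total cost is the sum. Online policies use only fixed costs, initial inventories, the (time-invariant) variable costs and orders up to the current period. $\mathrm{ALG}(I)$ is the expected total cost of the policy on instance $I$ and $\mathrm{OPT}(I)$ the offline optimal total cost. $\mathfrak R_{\mathrm{inv}}(\mathrm{ALG})$ is the supremum of $\mathrm{ALG}(I)/\mathrm{OPT}(I)$ over all $n,T$, initial inventories, nonnegative time-invariant variable costs $c_k^i$ and order sequences. *)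

theory Defs
  imports "HOL-Probability.Probability"
begin

text \<open>Items are indexed by i < n, periods by t in {1..T}.
  Orders: S t i :: nat.  Inventories: I i :: nat.  Variable costs c0 i, c1 i :: real.\<close>

definition period_cost ::
  "nat \<Rightarrow> real \<Rightarrow> real \<Rightarrow> (nat \<Rightarrow> real) \<Rightarrow> (nat \<Rightarrow> real)
   \<Rightarrow> (nat \<Rightarrow> nat) \<Rightarrow> (nat \<Rightarrow> nat) \<Rightarrow> real" where
  "period_cost n f0 f1 c0 c1 m0 m1 =
     (if (\<Sum>i<n. m0 i) > 0 then f0 else 0) + (\<Sum>i<n. c0 i * real (m0 i))
   + (if (\<Sum>i<n. m1 i) > 0 then f1 else 0) + (\<Sum>i<n. c1 i * real (m1 i))"

text \<open>Feasible (offline) plans: m1 t i units of item i shipped from the FDC in period t.\<close>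
definition feasible_plan ::
  "nat \<Rightarrow> nat \<Rightarrow> (nat \<Rightarrow> nat) \<Rightarrow> (nat \<Rightarrow> nat \<Rightarrow> nat) \<Rightarrow> (nat \<Rightarrow> nat \<Rightarrow> nat) \<Rightarrow> bool" where
  "feasible_plan n T I0 S m1 \<longleftrightarrow>
     (\<forall>t\<in>{1..T}. \<forall>i<n. m1 t i \<le> S t i \<and> (\<Sum>\<tau>=1..t. m1 \<tau> i) \<le> I0 i)"

definition plan_cost ::
  "nat \<Rightarrow> nat \<Rightarrow> real \<Rightarrow> real \<Rightarrow> (nat \<Rightarrow> real) \<Rightarrow> (nat \<Rightarrow> real)
   \<Rightarrow> (nat \<Rightarrow> nat \<Rightarrow> nat) \<Rightarrow> (nat \<Rightarrow> nat \<Rightarrow> nat) \<Rightarrow> real" where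
  "plan_cost n T f0 f1 c0 c1 S m1 =
     (\<Sum>t=1..T. period_cost n f0 f1 c0 c1 (\<lambda>i. S t i - m1 t i) (m1 t))"

definition OPT ::
  "nat \<Rightarrow> nat \<Rightarrow> real \<Rightarrow> real \<Rightarrow> (nat \<Rightarrow> real) \<Rightarrow> (nat \<Rightarrow> real)
   \<Rightarrow> (nat \<Rightarrow> nat) \<Rightarrow> (nat \<Rightarrow> nat \<Rightarrow> nat) \<Rightarrow> real" where
  "OPT n T f0 f1 c0 c1 I0 S =
     Inf (plan_cost n T f0 f1 c0 c1 S ` {m1. feasible_plan n T I0 S m1})"

definition p_rand :: "real \<Rightarrow> real \<Rightarrow> real \<Rightarrow> real" where
  "p_rand f0 f1 x =
     (if x \<le> f1 then 1
      else if x \<le> max f1 (f1\<^sup>2 / f0 - f0)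
        then (f1\<^sup>2 - (f0 + x) * f0) / (f1\<^sup>2 + (f0 + x) * (x - f1))
      else 0)"

text \<open>Distribution of the total cost of Randomized-Cost-Comparison V-Priority over
  k remaining periods, starting at period t with FDC inventory I.\<close>
fun rcc_cost ::
  "nat \<Rightarrow> real \<Rightarrow> real \<Rightarrow> (nat \<Rightarrow> real) \<Rightarrow> (nat \<Rightarrow> real) \<Rightarrow> (nat \<Rightarrow> nat \<Rightarrow> nat)
   \<Rightarrow> nat \<Rightarrow> nat \<Rightarrow> (nat \<Rightarrow> nat) \<Rightarrow> real pmf" where
  "rcc_cost n f0 f1 c0 c1 S 0 t I = return_pmf 0"
| "rcc_cost n f0 f1 c0 c1 S (Suc k) t I =
     (let mh1 = (\<lambda>i. if c1 i < c0 i then min (S t i) (I i) else 0);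
          mh0 = (\<lambda>i. S t i - mh1 i);
          x = (\<Sum>i<n. (c0 i - c1 i) * real (mh1 i))
      in bind_pmf (bernoulli_pmf (p_rand f0 f1 x)) (\<lambda>\<theta>.
           if \<theta> then
             map_pmf (\<lambda>r. period_cost n f0 f1 c0 c1 (S t) (\<lambda>i. 0) + r)
               (rcc_cost n f0 f1 c0 c1 S k (Suc t) I)
           else
             map_pmf (\<lambda>r. period_cost n f0 f1 c0 c1 mh0 mh1 + r)
               (rcc_cost n f0 f1 c0 c1 S k (Suc t) (\<lambda>i. I i - mh1 i))))"

definition ALG_rcc ::
  "nat \<Rightarrow> nat \<Rightarrow> real \<Rightarrow> real \<Rightarrow> (nat \<Rightarrow> real) \<Rightarrow> (nat \<Rightarrow> real)
   \<Rightarrow> (nat \<Rightarrow> nat) \<Rightarrow> (nat \<Rightarrow> nat \<Rightarrow> nat) \<Rightarrow> real" where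
  "ALG_rcc n T f0 f1 c0 c1 I0 S =
     measure_pmf.expectation (rcc_cost n f0 f1 c0 c1 S T 1 I0) (\<lambda>r. r)"

definition ratio_bound :: "real \<Rightarrow> real" where
  "ratio_bound w =
     (if w < (sqrt 5 - 1) / 2 then 1 + 1 / (1 - w + 2 * sqrt (1 - w)) else 1 + w)"

end

theory Submission
  imports Defs
begin



definition pn :: "real \<Rightarrow> real \<Rightarrow> real" where
  "pn w y = (if y \<le> 1 then 1 else if y \<le> max 1 (1/w - w)
      then (1 - (w+y)*w)/(1 + (w+y)*(y-1)) else 0)"

definition rb :: "real \<Rightarrow> real" where
  "rb w = (if w < (sqrt 5 - 1) / 2 then 1 + 1 / (1 - w + 2 * sqrt (1 - w)) else 1 + w)"

lemma phi_sq: "((sqrt 5 - 1)/2)^2 + (sqrt 5 - 1)/2 = (1::real)"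
proof -
  have "sqrt 5 * sqrt 5 = (5::real)" by simp
  thus ?thesis by (simp add: power2_eq_square algebra_simps field_simps)
qed

lemma ge_phi: assumes "w \<ge> (sqrt 5 - 1)/2" shows "w^2 + w \<ge> (1::real)"
proof -
  have "(sqrt 5 - 1)/2 > (0::real)" by (simp add: real_less_rsqrt)
  hence "((sqrt 5 - 1)/2)^2 \<le> w^2" using assms by (intro power_mono) auto
  thus ?thesis using phi_sq assms by linarith
qed

lemma rb_ge: assumes "w > 0" shows "rb w \<ge> 1 + w"
proof (cases "w < (sqrt 5 - 1) / 2")
  case True
  have s5: "sqrt 5 < (3::real)" by (rule real_less_lsqrt) auto
  hence w1: "w < 1" using True by (simp add: field_simps)
  define s where "s = sqrt (1 - w)"
  have s0: "s > 0" using w1 by (simp add: s_def)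
  have ss: "s^2 = 1 - w" using w1 by (simp add: s_def)
  have K: "s^2 + 2 * s > 0" using s0 by (simp add: add_pos_pos)
  have "(1 - s^2)*(s^2+2 * s) \<le> 1"
  proof -
    have "1 - (1 - s^2)*(s^2+2 * s) = (s^2+s-1)^2" by (simp add: power2_eq_square algebra_simps)
    thus ?thesis by (metis diff_ge_0_iff_ge zero_le_power2)
  qed
  hence "1 - s^2 \<le> 1/(s^2+2 * s)" using K by (simp add: field_simps)
  moreover have "rb w = 1 + 1/(s^2+2 * s)" using True ss by (simp add: rb_def s_def)
  ultimately show ?thesis using ss by simp
qed (simp add: rb_def)

lemma pn_mid:
  assumes w: "w > 0" and y1: "1 < y" and y2: "y \<le> 1/w - w"
  shows "w < (sqrt 5 - 1) / 2" and "0 \<le> pn w y" and "pn w y \<le> 1"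
    and "pn w y * (w+y) + (1 - pn w y)*(w+1) \<le> rb w"
    and "w + (1 - pn w y) \<le> rb w * w + (rb w - 1) * y"
proof -
  have "w*y \<le> 1 - w*w" using y2 w by (simp add: field_simps)
  hence wy: "w^2 + w < 1" using y1 w by (simp add: power2_eq_square) (smt (verit) mult_less_cancel_left1)
  show wp: "w < (sqrt 5 - 1) / 2"
  proof (rule ccontr)
    assume "\<not> ?thesis" hence "w \<ge> (sqrt 5 - 1) / 2" by simp
    from ge_phi[OF this] wy show False by simp
  qed
  have w1: "w < 1" using wy w by (smt (verit) zero_le_power2)
  define s where "s = sqrt (1 - w)"
  have s0: "s > 0" using w1 by (simp add: s_def)
  have ss: "s^2 = 1 - w" using w1 by (simp add: s_def)
  define K where "K = s^2 + 2 * s"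
  have K: "K > 0" using s0 by (simp add: K_def add_pos_pos)
  have rbw: "rb w = 1 + 1/K" using wp ss by (simp add: rb_def s_def K_def)
  define D where "D = 1 + (w+y)*(y-1)"
  have D: "D > 0" using y1 w unfolding D_def by (smt (verit) mult_pos_pos)
  have p: "pn w y = (1 - (w+y)*w)/D" using y1 y2 by (simp add: pn_def D_def)
  have num0: "1 - (w+y)*w \<ge> 0" using y2 w by (simp add: field_simps)
  have numD: "1 - (w+y)*w \<le> D" unfolding D_def using y1 w by (smt (verit) mult_nonneg_nonneg)
  show "0 \<le> pn w y" using p num0 D by simp
  show "pn w y \<le> 1" using p numD D by simp
  have wss: "w = 1 - s^2" using ss by simp
  have id1: "(1 - w*K)*D - K*(1-(w+y)*w)*(y-1) = (y - s^2 - s)^2"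
    unfolding D_def K_def wss by (simp add: power2_eq_square algebra_simps)
  have id2: "D - K*(y - 1 + w) = (y - s^2 - s)^2"
    unfolding D_def K_def wss by (simp add: power2_eq_square algebra_simps)
  have "K*(1-(w+y)*w)*(y-1) \<le> (1 - w*K)*D" using id1 by (metis diff_ge_0_iff_ge zero_le_power2)
  hence "(1-(w+y)*w)*(y-1)/D \<le> (1 - w*K)/K" using K D by (simp add: field_simps)
  hence "pn w y * (y - 1) \<le> 1/K - w" using K p by (simp add: field_simps)
  thus "pn w y * (w+y) + (1 - pn w y)*(w+1) \<le> rb w" using rbw by (simp add: algebra_simps)
  have "K*(y - 1 + w) \<le> D" using id2 by (metis diff_ge_0_iff_ge zero_le_power2)
  hence h: "(w+y)*(K*(y-1+w)) \<le> (w+y)*D" using w y1 by (intro mult_left_mono) auto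
  have "(w+y)*(y-1+w)/D \<le> (w+y)/K" using K D h
    by (simp add: divide_simps mult_ac)
  moreover have "1 - pn w y = (w+y)*(y-1+w)/D" using p D by (simp add: field_simps D_def)
  ultimately have "1 - pn w y \<le> (w+y)/K" by simp
  thus "w + (1 - pn w y) \<le> rb w * w + (rb w - 1) * y" using rbw by (simp add: algebra_simps add_divide_distrib)
qed

lemma pn_all:
  assumes w: "w > 0" and y: "y \<ge> 0"
  shows "0 \<le> pn w y \<and> pn w y \<le> 1
    \<and> pn w y * (w+y) + (1 - pn w y)*(w+1) \<le> rb w
    \<and> w + (1 - pn w y) \<le> rb w * w + (rb w - 1) * y"
proof -
  have R: "rb w \<ge> 1 + w" using rb_ge w by simp
  consider (a) "y \<le> 1" | (b) "1 < y" "y \<le> 1/w - w" | (c) "1 < y" "y > 1/w - w"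
    by linarith
  then show ?thesis
  proof cases
    case a
    hence p: "pn w y = 1" by (simp add: pn_def)
    have "w \<le> rb w * w" using R w by (simp add: mult_le_cancel_right1)
    moreover have "0 \<le> (rb w - 1) * y" using R w y by simp
    ultimately show ?thesis using p a R by simp
  next
    case b
    show ?thesis using pn_mid[OF w b] by simp
  next
    case c
    hence "\<not> y \<le> max 1 (1/w - w)" by simp
    hence p: "pn w y = 0" using c by (simp add: pn_def del: max_less_iff_conj le_max_iff_disj)
    have "w*y > 1 - w*w" using c w by (simp add: field_simps)
    hence "w*(w+y) > 1" by (simp add: algebra_simps)
    moreover have "w*(w+y) \<le> (rb w - 1)*(w+y)" using R w y by (intro mult_right_mono) auto
    ultimately have "1 < (rb w - 1)*(w+y)" by simp
    thus ?thesis using p R by (simp add: algebra_simps)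
  qed
qed




lemma item_hat:
  fixes Q mO Sv Iv :: nat
  assumes "mO \<le> Sv"
  shows "max 0 (real Q - real (Iv - min Sv Iv)) - max 0 (real mO + real Q - real Iv)
           \<le> real (min Sv Iv) - real mO"
proof -
  have "real mO \<le> real Sv" using assms by simp
  thus ?thesis by (cases "Sv \<le> Iv") (auto simp: min_def max_def of_nat_diff)
qed

lemma item_rdc:
  fixes Q mO Sv Iv :: nat
  assumes "mO \<le> Sv"
  shows "max 0 (real Q - real Iv) - max 0 (real mO + real Q - real Iv)
           \<le> - max 0 (real mO - real (min Sv Iv))"
proof -
  have "real mO \<le> real Sv" using assms by simp
  thus ?thesis by (cases "Sv \<le> Iv") (auto simp: min_def max_def of_nat_diff)
qed

lemma exp_shift:
  fixes M :: "real pmf"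
  assumes "finite (set_pmf M)"
  shows "measure_pmf.expectation (map_pmf (\<lambda>r. a + r) M) (\<lambda>r. r)
          = a + measure_pmf.expectation M (\<lambda>r. r)"
proof -
  have "measure_pmf.expectation (map_pmf (\<lambda>r. a + r) M) (\<lambda>r. r)
        = measure_pmf.expectation M (\<lambda>r. a + r)" by (rule integral_map_pmf)
  also have "\<dots> = measure_pmf.expectation M (\<lambda>_. a) + measure_pmf.expectation M (\<lambda>r. r)"
    by (rule Bochner_Integration.integral_add) (auto intro: integrable_measure_pmf_finite assms)
  finally show ?thesis by simp
qed

lemma exp_shift2:
  fixes M :: "real pmf"
  assumes "finite (set_pmf M)"
  shows "measure_pmf.expectation M ((+) a) = a + measure_pmf.expectation M (\<lambda>r. r)"
  using exp_shift[OF assms, of a] by simp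

lemma exp_bern:
  fixes M1 M2 :: "real pmf"
  assumes "0 \<le> p" "p \<le> 1" "finite (set_pmf M1)" "finite (set_pmf M2)"
  shows "measure_pmf.expectation (bind_pmf (bernoulli_pmf p) (\<lambda>\<theta>.
           if \<theta> then map_pmf (\<lambda>r. a + r) M1 else map_pmf (\<lambda>r. b + r) M2)) (\<lambda>r. r)
       = p * (a + measure_pmf.expectation M1 (\<lambda>r. r)) + (1 - p) * (b + measure_pmf.expectation M2 (\<lambda>r. r))"
proof -
  have "measure_pmf.expectation (bind_pmf (bernoulli_pmf p) (\<lambda>\<theta>.
           if \<theta> then map_pmf (\<lambda>r. a + r) M1 else map_pmf (\<lambda>r. b + r) M2)) (\<lambda>r. r)
     = (1 - p) * measure_pmf.expectation M2 ((+) b) + p * measure_pmf.expectation M1 ((+) a)"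
    apply (subst pmf_expectation_bind[of UNIV])
    using assms by (auto simp: UNIV_bool)
  also have "\<dots> = (1 - p) * (b + measure_pmf.expectation M2 (\<lambda>r. r)) + p * (a + measure_pmf.expectation M1 (\<lambda>r. r))"
    by (simp only: exp_shift2[OF assms(3)] exp_shift2[OF assms(4)])
  finally show ?thesis by simp
qed

lemma fin_rcc: "finite (set_pmf (rcc_cost n f0 f1 c0 c1 S k t I))"
  by (induction k arbitrary: t I) (auto simp: Let_def)




lemma p_rand_pn:
  assumes f0: "f0 > 0" and f1: "f1 > 0"
  shows "p_rand f0 f1 x = pn (f0/f1) (x/f1)"
proof -
  have e1: "(x \<le> f1) = (x/f1 \<le> 1)" using f1 by (simp add: divide_le_eq_1)
  have e2: "max f1 (f1\<^sup>2 / f0 - f0) = f1 * max 1 (1/(f0/f1) - f0/f1)"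
  proof -
    have "f1\<^sup>2 / f0 - f0 = f1 * (1/(f0/f1) - f0/f1)"
      using f0 f1 by (simp add: power2_eq_square field_simps)
    thus ?thesis using f1 by (simp add: max_mult_distrib_left)
  qed
  have e3: "(x \<le> max f1 (f1\<^sup>2 / f0 - f0)) = (x/f1 \<le> max 1 (1/(f0/f1) - f0/f1))"
    unfolding e2 using f1 by (simp add: pos_divide_le_eq mult.commute)
  have e4: "(f1\<^sup>2 - (f0 + x) * f0) / (f1\<^sup>2 + (f0 + x) * (x - f1))
     = (1 - (f0/f1 + x/f1) * (f0/f1)) / (1 + (f0/f1 + x/f1) * (x/f1 - 1))"
  proof -
    have "(1 - (f0/f1 + x/f1) * (f0/f1)) = (f1\<^sup>2 - (f0 + x) * f0) / f1^2"
      using f1 by (simp add: field_simps power2_eq_square)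
    moreover have "(1 + (f0/f1 + x/f1) * (x/f1 - 1)) = (f1\<^sup>2 + (f0 + x) * (x - f1)) / f1^2"
      using f1 by (simp add: field_simps power2_eq_square)
    ultimately show ?thesis using f1 by simp
  qed
  show ?thesis unfolding p_rand_def pn_def e1 e3 e4 by simp
qed

lemma rb_eq: "ratio_bound = rb"
  by (rule ext) (simp add: ratio_bound_def rb_def)

lemma key:
  assumes f0: "f0 > 0" and f1: "f1 > 0" and x: "x \<ge> 0"
  shows "0 \<le> p_rand f0 f1 x \<and> p_rand f0 f1 x \<le> 1
    \<and> p_rand f0 f1 x * (f0 + x) + (1 - p_rand f0 f1 x) * (f0 + f1) \<le> ratio_bound (f0/f1) * f1
    \<and> f0 + (1 - p_rand f0 f1 x) * f1 \<le> ratio_bound (f0/f1) * f0 + (ratio_bound (f0/f1) - 1) * x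
    \<and> ratio_bound (f0/f1) \<ge> 1"
proof -
  define w where "w = f0/f1"
  define y where "y = x/f1"
  define p where "p = p_rand f0 f1 x"
  define R where "R = ratio_bound (f0/f1)"
  have w: "w > 0" using f0 f1 by (simp add: w_def)
  have y: "y \<ge> 0" using x f1 by (simp add: y_def)
  have pp: "p = pn w y" using p_rand_pn[OF f0 f1] by (simp add: p_def w_def y_def)
  have RR: "R = rb w" by (simp add: R_def rb_eq w_def)
  from pn_all[OF w y] have A: "0 \<le> p" "p \<le> 1" "p * (w+y) + (1 - p)*(w+1) \<le> R"
     "w + (1 - p) \<le> R * w + (R - 1) * y" by (auto simp: pp RR)
  have R1: "R \<ge> 1" using rb_ge[OF w] w RR by simp
  have f0e: "f0 = w * f1" and xe: "x = y * f1" using f1 by (auto simp: w_def y_def)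
  have "f1 * (p * (w+y) + (1 - p)*(w+1)) \<le> f1 * R" using A(3) f1 by simp
  hence B: "p * (f0 + x) + (1 - p) * (f0 + f1) \<le> R * f1"
    unfolding f0e xe by (simp add: algebra_simps)
  have "f1 * (w + (1 - p)) \<le> f1 * (R * w + (R - 1) * y)" using A(4) f1 by simp
  hence C: "f0 + (1 - p) * f1 \<le> R * f0 + (R - 1) * x"
    unfolding f0e xe by (simp add: algebra_simps)
  show ?thesis using A(1,2) B C R1 by (simp add: p_def R_def)
qed




lemma aux_min: fixes u a m :: real assumes "u \<ge> 0"
  shows "u * a - u * max 0 (a - m) \<le> u * m"
proof -
  have "u * a - u * max 0 (a - m) = u * (a - max 0 (a - m))" by (simp add: algebra_simps)
  also have "\<dots> \<le> u * m" using assms by (intro mult_left_mono) auto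
  finally show ?thesis .
qed

lemma cost_step:
  fixes n :: nat and f0 f1 :: real and c0 c1 :: "nat \<Rightarrow> real" and Sv Iv mO :: "nat \<Rightarrow> nat"
  assumes f0: "f0 > 0" and f1: "f1 > 0" and nn: "\<forall>i<n. c0 i \<ge> 0 \<and> c1 i \<ge> 0"
    and mO: "\<forall>i<n. mO i \<le> Sv i"
  defines "mh1 \<equiv> (\<lambda>i. if c1 i < c0 i then min (Sv i) (Iv i) else 0)"
  defines "mh0 \<equiv> (\<lambda>i. Sv i - mh1 i)"
  defines "x \<equiv> (\<Sum>i<n. (c0 i - c1 i) * real (mh1 i))"
  defines "z \<equiv> (\<Sum>i<n. if c1 i < c0 i then (c0 i - c1 i) * real (mO i) else 0)"
  defines "b \<equiv> (\<Sum>i<n. if c1 i < c0 i then (c0 i - c1 i) * max 0 (real (mO i) - real (mh1 i)) else 0)"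
  defines "p \<equiv> p_rand f0 f1 x" and "R \<equiv> ratio_bound (f0/f1)"
  shows "p * (period_cost n f0 f1 c0 c1 Sv (\<lambda>i. 0) - b)
         + (1 - p) * (period_cost n f0 f1 c0 c1 mh0 mh1 + x - z)
         \<le> R * period_cost n f0 f1 c0 c1 (\<lambda>i. Sv i - mO i) mO"
proof -
  define A where "A = (\<Sum>i<n. c0 i * real (Sv i))"
  define Vo where "Vo = (\<Sum>i<n. c0 i * real (Sv i - mO i)) + (\<Sum>i<n. c1 i * real (mO i))"
  have mh1S: "mh1 i \<le> Sv i" for i by (simp add: mh1_def)
  have x0: "x \<ge> 0" unfolding x_def by (rule sum_nonneg) (simp add: mh1_def)
  have z0: "z \<ge> 0" unfolding z_def by (rule sum_nonneg) simp
  have b0: "b \<ge> 0" unfolding b_def by (rule sum_nonneg) simp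
  have hA: "(\<Sum>i<n. c0 i * real (mh0 i)) + (\<Sum>i<n. c1 i * real (mh1 i)) = A - x"
  proof -
    have "(\<Sum>i<n. c0 i * real (mh0 i)) + (\<Sum>i<n. c1 i * real (mh1 i))
        = (\<Sum>i<n. c0 i * real (mh0 i) + c1 i * real (mh1 i))" by (simp add: sum.distrib)
    also have "\<dots> = (\<Sum>i<n. c0 i * real (Sv i) - (c0 i - c1 i) * real (mh1 i))"
      by (rule sum.cong) (auto simp: mh0_def of_nat_diff mh1S algebra_simps)
    also have "\<dots> = A - x" by (simp add: sum_subtractf A_def x_def)
    finally show ?thesis .
  qed
  have Ax: "A - x \<ge> 0"
  proof -
    have "(\<Sum>i<n. c0 i * real (mh0 i)) \<ge> 0" by (rule sum_nonneg) (use nn in simp)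
    moreover have "(\<Sum>i<n. c1 i * real (mh1 i)) \<ge> 0" by (rule sum_nonneg) (use nn in simp)
    ultimately show ?thesis using hA by linarith
  qed
  have Vo0: "Vo \<ge> 0" unfolding Vo_def
    by (intro add_nonneg_nonneg sum_nonneg) (use nn in simp)+
  have VoA: "Vo \<ge> A - z"
  proof -
    have "Vo = (\<Sum>i<n. c0 i * real (Sv i) - (c0 i - c1 i) * real (mO i))"
      unfolding Vo_def sum.distrib[symmetric]
      by (rule sum.cong) (use mO in \<open>auto simp: of_nat_diff algebra_simps\<close>)
    also have "\<dots> \<ge> (\<Sum>i<n. c0 i * real (Sv i) - (if c1 i < c0 i then (c0 i - c1 i) * real (mO i) else 0))"
      by (rule sum_mono) (auto simp: mult_nonpos_nonneg)
    finally show ?thesis by (simp add: sum_subtractf A_def z_def)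
  qed
  have zb: "0 \<le> z - b \<and> z - b \<le> x"
  proof -
    have "z - b = (\<Sum>i<n. (if c1 i < c0 i then (c0 i - c1 i) * real (mO i) else 0)
          - (if c1 i < c0 i then (c0 i - c1 i) * max 0 (real (mO i) - real (mh1 i)) else 0))"
      by (simp add: z_def b_def sum_subtractf)
    moreover have "\<dots> \<ge> 0"
      by (rule sum_nonneg) (auto intro!: mult_left_mono)
    moreover have "\<dots> \<le> x" unfolding x_def
      by (rule sum_mono) (auto intro!: aux_min simp: mh1_def)
    ultimately show ?thesis by simp
  qed
  from key[OF f0 f1 x0] have K: "0 \<le> p" "p \<le> 1" "p * (f0 + x) + (1 - p) * (f0 + f1) \<le> R * f1"
    "f0 + (1 - p) * f1 \<le> R * f0 + (R - 1) * x" "R \<ge> 1" by (simp_all add: p_def R_def)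
  define fh0 where "fh0 = (if (\<Sum>i<n. mh0 i) > 0 then f0 else 0)"
  define fh1 where "fh1 = (if (\<Sum>i<n. mh1 i) > 0 then f1 else 0)"
  define fo0 where "fo0 = (if (\<Sum>i<n. Sv i - mO i) > 0 then f0 else 0)"
  define fo1 where "fo1 = (if (\<Sum>i<n. mO i) > 0 then f1 else 0)"
  have PCh: "period_cost n f0 f1 c0 c1 mh0 mh1 = fh0 + fh1 + (A - x)"
    using hA by (simp add: period_cost_def fh0_def fh1_def)
  have PCo: "period_cost n f0 f1 c0 c1 (\<lambda>i. Sv i - mO i) mO = fo0 + fo1 + Vo"
    by (simp add: period_cost_def fo0_def fo1_def Vo_def)
  have PCr: "period_cost n f0 f1 c0 c1 Sv (\<lambda>i. 0) = (if (\<Sum>i<n. Sv i) > 0 then f0 else 0) + A"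
    by (simp add: period_cost_def A_def)
  have fh: "0 \<le> fh0" "fh0 \<le> f0" "0 \<le> fh1" "fh1 \<le> f1" using f0 f1 by (auto simp: fh0_def fh1_def)
  have fo: "0 \<le> fo0" "0 \<le> fo1" using f0 f1 by (auto simp: fo0_def fo1_def)
  show ?thesis
  proof (cases "(\<Sum>i<n. Sv i) > 0")
    case False
    hence S0: "\<forall>i<n. Sv i = 0" by simp
    have "mh1 i = 0" if "i < n" for i using S0 that mh1S[of i] by simp
    hence "x = 0" "fh1 = 0" by (simp_all add: x_def fh1_def)
    moreover have "fh0 = 0" using S0 by (simp add: fh0_def mh0_def)
    moreover have "A = 0" using S0 by (simp add: A_def)
    moreover have "mO i = 0" if "i < n" for i using S0 mO that by auto
    hence "z = 0" "b = 0" by (auto simp: z_def b_def intro!: sum.neutral)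
    ultimately have "p * (period_cost n f0 f1 c0 c1 Sv (\<lambda>i. 0) - b)
         + (1 - p) * (period_cost n f0 f1 c0 c1 mh0 mh1 + x - z) = 0"
      using False PCr PCh by simp
    moreover have "R * period_cost n f0 f1 c0 c1 (\<lambda>i. Sv i - mO i) mO \<ge> 0"
      using PCo fo Vo0 K(5) by simp
    ultimately show ?thesis by simp
  next
    case Spos: True
    show ?thesis
    proof (cases "(\<Sum>i<n. mO i) > 0")
      case True
      hence "fo1 = f1" by (simp add: fo1_def)
      have h1: "p * (f0 + A - b) \<le> p * (f0 + x + (A - z))" using zb K(1) by (intro mult_left_mono) auto
      have h2: "(1 - p) * (fh0 + fh1 + (A - z)) \<le> (1 - p) * (f0 + f1 + (A - z))"
        using fh K(2) by (intro mult_left_mono) auto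
      have h3: "p * (f0 + x + (A - z)) + (1 - p) * (f0 + f1 + (A - z))
          = p * (f0 + x) + (1 - p) * (f0 + f1) + (A - z)" by (simp add: algebra_simps)
      have h4: "Vo \<le> R * Vo" using Vo0 K(5) by (simp add: mult_le_cancel_right1)
      have h5: "R * (fo0 + fo1 + Vo) = R * fo0 + R * f1 + R * Vo" using \<open>fo1 = f1\<close> by (simp add: algebra_simps)
      have h6: "R * fo0 \<ge> 0" using fo K(5) by simp
      have lhs: "p * (period_cost n f0 f1 c0 c1 Sv (\<lambda>i. 0) - b)
         + (1 - p) * (period_cost n f0 f1 c0 c1 mh0 mh1 + x - z)
         = p * (f0 + A - b) + (1 - p) * (fh0 + fh1 + (A - z))"
        using Spos PCr PCh by (simp add: algebra_simps)
      show ?thesis unfolding lhs PCo h5 using h1 h2 h3 h4 h6 K(3) VoA by linarith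
    next
      case False
      hence O0: "\<forall>i<n. mO i = 0" by simp
      hence "z = 0" "b = 0" by (auto simp: z_def b_def intro!: sum.neutral)
      have "Vo = A" using O0 by (simp add: Vo_def A_def)
      have "fo0 = f0" using O0 Spos by (simp add: fo0_def)
      have "fo1 = 0" using False by (simp add: fo1_def)
      have h2: "(1 - p) * (fh0 + fh1 + A) \<le> (1 - p) * (f0 + f1 + A)"
        using fh K(2) by (intro mult_left_mono) auto
      have h3: "(R - 1) * x \<le> (R - 1) * A" using Ax K(5) by (intro mult_left_mono) auto
      have lhs: "p * (period_cost n f0 f1 c0 c1 Sv (\<lambda>i. 0) - b)
         + (1 - p) * (period_cost n f0 f1 c0 c1 mh0 mh1 + x - z)
         = p * (f0 + A) + (1 - p) * (fh0 + fh1 + A)"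
        using Spos PCr PCh \<open>z = 0\<close> \<open>b = 0\<close> by (simp add: algebra_simps)
      have h4: "p * (f0 + A) + (1 - p) * (f0 + f1 + A) = f0 + A + (1 - p) * f1"
        by (simp add: algebra_simps)
      have h5: "R * (fo0 + fo1 + Vo) = R * f0 + (R - 1) * A + A"
        using \<open>Vo = A\<close> \<open>fo0 = f0\<close> \<open>fo1 = 0\<close> by (simp add: algebra_simps)
      show ?thesis unfolding lhs PCo h5 using h2 h3 h4 K(4) by linarith
    qed
  qed
qed




definition PCost where
  "PCost n f0 f1 c0 c1 S m t k = (\<Sum>\<tau>\<in>{t..<t+k}. period_cost n f0 f1 c0 c1 (\<lambda>i. S \<tau> i - m \<tau> i) (m \<tau>))"
definition Use :: "(nat \<Rightarrow> nat \<Rightarrow> nat) \<Rightarrow> nat \<Rightarrow> nat \<Rightarrow> nat \<Rightarrow> nat" where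
  "Use m t k i = (\<Sum>\<tau>\<in>{t..<t+k}. m \<tau> i)"
definition Phi where
  "Phi n c0 c1 m t k I = (\<Sum>i<n. if c1 i < c0 i then (c0 i - c1 i) * max 0 (real (Use m t k i) - real (I i)) else 0)"

lemma scale_aux: fixes u a b c :: real assumes "u \<ge> 0" "a - b \<le> c" shows "u * a \<le> u * b + u * c"
proof -
  have "u * (a - b) \<le> u * c" using assms by (intro mult_left_mono) auto
  thus ?thesis by (simp add: algebra_simps)
qed

lemma rcc_exp:
  fixes n :: nat and f0 f1 :: real and c0 c1 :: "nat \<Rightarrow> real"
    and S :: "nat \<Rightarrow> nat \<Rightarrow> nat" and t k :: nat and I :: "nat \<Rightarrow> nat"
  assumes f0: "f0 > 0" and f1: "f1 > 0"
  defines "mh1 \<equiv> (\<lambda>i. if c1 i < c0 i then min (S t i) (I i) else 0)"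
  defines "mh0 \<equiv> (\<lambda>i. S t i - mh1 i)"
  defines "x \<equiv> (\<Sum>i<n. (c0 i - c1 i) * real (mh1 i))"
  defines "p \<equiv> p_rand f0 f1 x"
  shows "measure_pmf.expectation (rcc_cost n f0 f1 c0 c1 S (Suc k) t I) (\<lambda>r. r)
    = p * (period_cost n f0 f1 c0 c1 (S t) (\<lambda>i. 0) + measure_pmf.expectation (rcc_cost n f0 f1 c0 c1 S k (Suc t) I) (\<lambda>r. r))
    + (1 - p) * (period_cost n f0 f1 c0 c1 mh0 mh1 + measure_pmf.expectation (rcc_cost n f0 f1 c0 c1 S k (Suc t) (\<lambda>i. I i - mh1 i)) (\<lambda>r. r))"
proof -
  have x0: "x \<ge> 0" unfolding x_def by (rule sum_nonneg) (simp add: mh1_def)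
  from key[OF f0 f1 x0] have "0 \<le> p" "p \<le> 1" by (simp_all add: p_def)
  thus ?thesis
    unfolding rcc_cost.simps Let_def mh1_def[symmetric] mh0_def[symmetric] x_def[symmetric] p_def[symmetric]
    by (intro exp_bern) (auto simp: fin_rcc)
qed

lemma inv:
  fixes n :: nat and f0 f1 :: real and c0 c1 :: "nat \<Rightarrow> real"
  assumes f0: "f0 > 0" and f1: "f1 > 0" and nn: "\<forall>i<n. c0 i \<ge> 0 \<and> c1 i \<ge> 0"
  shows "(\<forall>\<tau> i. t \<le> \<tau> \<and> \<tau> < t + k \<and> i < n \<longrightarrow> m \<tau> i \<le> S \<tau> i) \<Longrightarrow>
    measure_pmf.expectation (rcc_cost n f0 f1 c0 c1 S k t I) (\<lambda>r. r)
      \<le> ratio_bound (f0/f1) * PCost n f0 f1 c0 c1 S m t k + Phi n c0 c1 m t k I"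
proof (induction k arbitrary: t I)
  case 0
  have "Phi n c0 c1 m t 0 I \<ge> 0" unfolding Phi_def by (rule sum_nonneg) simp
  thus ?case by (simp add: PCost_def)
next
  case (Suc k)
  define R where "R = ratio_bound (f0/f1)"
  define mh1 where "mh1 = (\<lambda>i. if c1 i < c0 i then min (S t i) (I i) else 0)"
  define mh0 where "mh0 = (\<lambda>i. S t i - mh1 i)"
  define x where "x = (\<Sum>i<n. (c0 i - c1 i) * real (mh1 i))"
  define p where "p = p_rand f0 f1 x"
  define z where "z = (\<Sum>i<n. if c1 i < c0 i then (c0 i - c1 i) * real (m t i) else 0)"
  define b where "b = (\<Sum>i<n. if c1 i < c0 i then (c0 i - c1 i) * max 0 (real (m t i) - real (mh1 i)) else 0)"
  define I' where "I' = (\<lambda>i. I i - mh1 i)"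
  define E1 where "E1 = measure_pmf.expectation (rcc_cost n f0 f1 c0 c1 S k (Suc t) I) (\<lambda>r. r)"
  define E2 where "E2 = measure_pmf.expectation (rcc_cost n f0 f1 c0 c1 S k (Suc t) I') (\<lambda>r. r)"
  define PCr where "PCr = period_cost n f0 f1 c0 c1 (S t) (\<lambda>i. 0)"
  define PCh where "PCh = period_cost n f0 f1 c0 c1 mh0 mh1"
  define PCo where "PCo = period_cost n f0 f1 c0 c1 (\<lambda>i. S t i - m t i) (m t)"
  define P' where "P' = PCost n f0 f1 c0 c1 S m (Suc t) k"
  define Ph where "Ph = Phi n c0 c1 m t (Suc k) I"
  have x0: "x \<ge> 0" unfolding x_def by (rule sum_nonneg) (simp add: mh1_def)
  from key[OF f0 f1 x0] have p01: "0 \<le> p" "p \<le> 1" by (simp_all add: p_def)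
  have prem: "\<forall>\<tau> i. Suc t \<le> \<tau> \<and> \<tau> < Suc t + k \<and> i < n \<longrightarrow> m \<tau> i \<le> S \<tau> i"
    using Suc.prems by auto
  have IH1: "E1 \<le> R * P' + Phi n c0 c1 m (Suc t) k I"
    using Suc.IH[OF prem] by (simp add: E1_def R_def P'_def)
  have IH2: "E2 \<le> R * P' + Phi n c0 c1 m (Suc t) k I'"
    using Suc.IH[OF prem] by (simp add: E2_def R_def P'_def)
  have mO: "\<forall>i<n. m t i \<le> S t i" using Suc.prems by auto
  have CS: "p * (PCr - b) + (1 - p) * (PCh + x - z) \<le> R * PCo"
    using cost_step[OF f0 f1 nn mO, of I]
    unfolding PCr_def PCh_def PCo_def mh0_def mh1_def x_def z_def b_def p_def R_def by simp
  have Esplit: "measure_pmf.expectation (rcc_cost n f0 f1 c0 c1 S (Suc k) t I) (\<lambda>r. r)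
      = p * (PCr + E1) + (1 - p) * (PCh + E2)"
    using rcc_exp[OF f0 f1, where S=S and t=t and I=I and n=n and k=k]
    unfolding PCr_def PCh_def E1_def E2_def I'_def mh0_def mh1_def x_def p_def by simp
  have PCs: "PCost n f0 f1 c0 c1 S m t (Suc k) = PCo + P'"
    unfolding PCost_def PCo_def P'_def by (subst sum.atLeast_Suc_lessThan) auto
  have Uses: "Use m t (Suc k) i = m t i + Use m (Suc t) k i" for i
    unfolding Use_def by (subst sum.atLeast_Suc_lessThan) auto
  have x_if: "x = (\<Sum>i<n. if c1 i < c0 i then (c0 i - c1 i) * real (mh1 i) else 0)"
    unfolding x_def by (rule sum.cong) (auto simp: mh1_def)
  have P1: "Phi n c0 c1 m (Suc t) k I' \<le> Ph + (x - z)"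
  proof -
    have "Phi n c0 c1 m (Suc t) k I' \<le> (\<Sum>i<n. (if c1 i < c0 i then (c0 i - c1 i) * max 0 (real (Use m t (Suc k) i) - real (I i)) else 0)
        + ((if c1 i < c0 i then (c0 i - c1 i) * real (mh1 i) else 0) - (if c1 i < c0 i then (c0 i - c1 i) * real (m t i) else 0)))"
      unfolding Phi_def
    proof (rule sum_mono)
      fix i assume "i \<in> {..<n}"
      hence "m t i \<le> S t i" using mO by simp
      from item_hat[OF this, of "Use m (Suc t) k i" "I i"]
      show "(if c1 i < c0 i then (c0 i - c1 i) * max 0 (real (Use m (Suc t) k i) - real (I' i)) else 0)
        \<le> (if c1 i < c0 i then (c0 i - c1 i) * max 0 (real (Use m t (Suc k) i) - real (I i)) else 0)
        + ((if c1 i < c0 i then (c0 i - c1 i) * real (mh1 i) else 0) - (if c1 i < c0 i then (c0 i - c1 i) * real (m t i) else 0))"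
      proof (cases "c1 i < c0 i")
        case True
        have u: "c0 i - c1 i \<ge> 0" using True by simp
        have "(c0 i - c1 i) * max 0 (real (Use m (Suc t) k i) - real (I i - min (S t i) (I i)))
          \<le> (c0 i - c1 i) * max 0 (real (m t i) + real (Use m (Suc t) k i) - real (I i))
            + (c0 i - c1 i) * (real (min (S t i) (I i)) - real (m t i))"
          by (rule scale_aux[OF u item_hat[OF \<open>m t i \<le> S t i\<close>]])
        thus ?thesis using True by (simp add: I'_def mh1_def Uses right_diff_distrib)
      qed simp
    qed
    also have "\<dots> = Ph + (x - z)"
      by (simp add: sum.distrib sum_subtractf Ph_def Phi_def x_if z_def)
    finally show ?thesis .
  qed
  have P2: "Phi n c0 c1 m (Suc t) k I \<le> Ph - b"
  proof -
    have "Phi n c0 c1 m (Suc t) k I \<le> (\<Sum>i<n. (if c1 i < c0 i then (c0 i - c1 i) * max 0 (real (Use m t (Suc k) i) - real (I i)) else 0)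
        - (if c1 i < c0 i then (c0 i - c1 i) * max 0 (real (m t i) - real (mh1 i)) else 0))"
      unfolding Phi_def
    proof (rule sum_mono)
      fix i assume "i \<in> {..<n}"
      hence "m t i \<le> S t i" using mO by simp
      from item_rdc[OF this, of "Use m (Suc t) k i" "I i"]
      show "(if c1 i < c0 i then (c0 i - c1 i) * max 0 (real (Use m (Suc t) k i) - real (I i)) else 0)
        \<le> (if c1 i < c0 i then (c0 i - c1 i) * max 0 (real (Use m t (Suc k) i) - real (I i)) else 0)
        - (if c1 i < c0 i then (c0 i - c1 i) * max 0 (real (m t i) - real (mh1 i)) else 0)"
      proof (cases "c1 i < c0 i")
        case True
        have u: "c0 i - c1 i \<ge> 0" using True by simp
        have "(c0 i - c1 i) * max 0 (real (Use m (Suc t) k i) - real (I i))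
          \<le> (c0 i - c1 i) * max 0 (real (m t i) + real (Use m (Suc t) k i) - real (I i))
            + (c0 i - c1 i) * (- max 0 (real (m t i) - real (min (S t i) (I i))))"
          by (rule scale_aux[OF u item_rdc[OF \<open>m t i \<le> S t i\<close>]])
        thus ?thesis using True by (simp add: mh1_def Uses)
      qed simp
    qed
    also have "\<dots> = Ph - b"
      by (simp add: sum_subtractf Ph_def Phi_def b_def)
    finally show ?thesis .
  qed
  have A1: "p * E1 \<le> p * (R * P' + (Ph - b))" using IH1 P2 p01 by (intro mult_left_mono) auto
  have A2: "(1 - p) * E2 \<le> (1 - p) * (R * P' + (Ph + (x - z)))" using IH2 P1 p01 by (intro mult_left_mono) auto
  have A3: "p * (PCr + (R * P' + (Ph - b))) + (1 - p) * (PCh + (R * P' + (Ph + (x - z))))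
     = p * (PCr - b) + (1 - p) * (PCh + x - z) + R * P' + Ph" by (simp add: algebra_simps)
  have "p * (PCr + E1) + (1 - p) * (PCh + E2) \<le> R * (PCo + P') + Ph"
    using A1 A2 A3 CS by (simp add: algebra_simps)
  thus ?case using Esplit PCs by (simp add: R_def Ph_def)
qed


lemma feasible_Use:
  assumes "feasible_plan n T I0 S m1" "i < n"
  shows "Use m1 1 T i \<le> I0 i"
proof (cases T)
  case 0 thus ?thesis by (simp add: Use_def)
next
  case (Suc T')
  hence "T \<in> {1..T}" by simp
  with assms have "(\<Sum>\<tau>=1..T. m1 \<tau> i) \<le> I0 i" unfolding feasible_plan_def by blast
  moreover have "{1..<1+T} = {1..T}" by auto
  ultimately show ?thesis by (simp add: Use_def)
qed

theorem theorem8: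
  fixes f0 f1 :: real
  assumes "f0 > 0" and "f1 > 0"
  shows "\<forall>(n::nat) (T::nat) (I0::nat \<Rightarrow> nat) (c0::nat \<Rightarrow> real) (c1::nat \<Rightarrow> real)
            (S::nat \<Rightarrow> nat \<Rightarrow> nat).
           (\<forall>i<n. c0 i \<ge> 0 \<and> c1 i \<ge> 0) \<longrightarrow>
           ALG_rcc n T f0 f1 c0 c1 I0 S
             \<le> ratio_bound (f0 / f1) * OPT n T f0 f1 c0 c1 I0 S"
proof (intro allI impI)
  fix n T :: nat and I0 :: "nat \<Rightarrow> nat" and c0 c1 :: "nat \<Rightarrow> real" and S :: "nat \<Rightarrow> nat \<Rightarrow> nat"
  assume nn: "\<forall>i<n. c0 i \<ge> (0::real) \<and> c1 i \<ge> 0"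
  define R where "R = ratio_bound (f0/f1)"
  have R1: "R \<ge> 1" using key[OF assms, of 0] by (simp add: R_def)
  have bound: "ALG_rcc n T f0 f1 c0 c1 I0 S / R \<le> plan_cost n T f0 f1 c0 c1 S m1"
    if fe: "feasible_plan n T I0 S m1" for m1
  proof -
    have prem: "\<forall>\<tau> i. 1 \<le> \<tau> \<and> \<tau> < 1 + T \<and> i < n \<longrightarrow> m1 \<tau> i \<le> S \<tau> i"
      using fe unfolding feasible_plan_def by auto
    have "Phi n c0 c1 m1 1 T I0 = 0"
      unfolding Phi_def using feasible_Use[OF fe] by (auto intro!: sum.neutral)
    moreover have "PCost n f0 f1 c0 c1 S m1 1 T = plan_cost n T f0 f1 c0 c1 S m1"
    proof -
      have "{1..<1+T} = {1..T}" by auto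
      thus ?thesis by (simp add: PCost_def plan_cost_def)
    qed
    ultimately have "ALG_rcc n T f0 f1 c0 c1 I0 S \<le> R * plan_cost n T f0 f1 c0 c1 S m1"
      using inv[OF assms nn prem, of I0] by (simp add: ALG_rcc_def R_def)
    thus ?thesis using R1 by (simp add: pos_divide_le_eq mult.commute)
  qed
  have ne: "plan_cost n T f0 f1 c0 c1 S ` {m1. feasible_plan n T I0 S m1} \<noteq> {}"
  proof -
    have "feasible_plan n T I0 S (\<lambda>_ _. 0)" by (simp add: feasible_plan_def)
    thus ?thesis by blast
  qed
  have "ALG_rcc n T f0 f1 c0 c1 I0 S / R \<le> OPT n T f0 f1 c0 c1 I0 S"
    unfolding OPT_def by (rule cInf_greatest[OF ne]) (use bound in auto)
  thus "ALG_rcc n T f0 f1 c0 c1 I0 S \<le> ratio_bound (f0 / f1) * OPT n T f0 f1 c0 c1 I0 S"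
    using R1 by (simp add: R_def pos_divide_le_eq mult.commute)
qed

end
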